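(* Let $G=(V,E)$ be a finite simple graph with at least one vertex, and let $r$ be the largest eigenvalue of the adjacency matrix of its connection graph $G'$. Then the spectral radius $\rho$ of the Hodge Laplacian $H=(d+d^T)^2$ of $G$ satisfies $$\rho \le (1+r) - \frac{1}{1+r}.$$
   Context: Let $G=(V,E)$ be a finite simple graph. Its associated $1$-dimensional simplicial complex is the set of simplices $X=\{\{v\}: v\in V\}\cup E$, where each edge is regarded as a $2$-element subset of $V$; put $N=|V|+|E|$ and index $N\times N$ matrices by $X$. The connection graph $G'$ has vertex set $X$, and two distinct $x,y\in X$ are adjacent iff $x\cap y\neq\emptyset$. For the Hodge Laplacian, fix an orientation of each edge; for an edge $x=\{a,b\}$ oriented from $a$ to $b$ set $d(x,\{a\})=-1$, $d(x,\{b\})=1$, and let all other entries of $d$ be $0$. The Hodge Laplacian is $H=(d+d^T)^2$; it is the direct sum of the Kirchhoff Laplacian $H_0$ (on vertices) and the $1$-form Laplacian $H_1$ (on edges), and its spectrum does not depend on the chosen orientation. *)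

theory Defs
  imports Complex_Main
begin

definition simple_graph :: "'a set \<Rightarrow> 'a set set \<Rightarrow> bool" where
  "simple_graph V E \<longleftrightarrow> finite V \<and>
     (\<forall>e\<in>E. \<exists>a b. a \<in> V \<and> b \<in> V \<and> a \<noteq> b \<and> e = {a, b})"

definition simplices :: "'a set \<Rightarrow> 'a set set \<Rightarrow> 'a set set" where
  "simplices V E = (\<lambda>v. {v}) ` V \<union> E"

text \<open>Matrices indexed by the finite set X are functions X \<Rightarrow> X \<Rightarrow> real
  (entries outside X are irrelevant).\<close>

definition conn_adj :: "'a set \<Rightarrow> 'a set \<Rightarrow> real" where
  "conn_adj x y = (if x \<noteq> y \<and> x \<inter> y \<noteq> {} then 1 else 0)"

definition orientation :: "'a set set \<Rightarrow> ('a set \<Rightarrow> 'a) \<Rightarrow> bool" where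
  "orientation E head \<longleftrightarrow> (\<forall>e\<in>E. head e \<in> e)"

definition ext_d :: "'a set set \<Rightarrow> ('a set \<Rightarrow> 'a) \<Rightarrow> 'a set \<Rightarrow> 'a set \<Rightarrow> real" where
  "ext_d E head x y =
     (if x \<in> E \<and> y = {head x} then 1
      else if x \<in> E \<and> (\<exists>a. y = {a} \<and> a \<in> x \<and> a \<noteq> head x) then -1
      else 0)"

definition mat_mult_on :: "'b set \<Rightarrow> ('b \<Rightarrow> 'b \<Rightarrow> real) \<Rightarrow> ('b \<Rightarrow> 'b \<Rightarrow> real) \<Rightarrow> 'b \<Rightarrow> 'b \<Rightarrow> real" where
  "mat_mult_on X A B x y = (\<Sum>z\<in>X. A x z * B z y)"

definition hodge :: "'a set \<Rightarrow> 'a set set \<Rightarrow> ('a set \<Rightarrow> 'a) \<Rightarrow> 'a set \<Rightarrow> 'a set \<Rightarrow> real" where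
  "hodge V E head =
     (let D = (\<lambda>x y. ext_d E head x y + ext_d E head y x)
      in mat_mult_on (simplices V E) D D)"

definition is_eigenvalue_on :: "'b set \<Rightarrow> ('b \<Rightarrow> 'b \<Rightarrow> real) \<Rightarrow> complex \<Rightarrow> bool" where
  "is_eigenvalue_on X A mu \<longleftrightarrow>
     (\<exists>v :: 'b \<Rightarrow> complex. (\<exists>x\<in>X. v x \<noteq> 0) \<and>
        (\<forall>x\<in>X. (\<Sum>y\<in>X. complex_of_real (A x y) * v y) = mu * v x))"

definition spectral_radius_on :: "'b set \<Rightarrow> ('b \<Rightarrow> 'b \<Rightarrow> real) \<Rightarrow> real" where
  "spectral_radius_on X A = Max {cmod mu | mu. is_eigenvalue_on X A mu}"

definition largest_eigenvalue_on :: "'b set \<Rightarrow> ('b \<Rightarrow> 'b \<Rightarrow> real) \<Rightarrow> real" where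
  "largest_eigenvalue_on X A = Max {r. is_eigenvalue_on X A (complex_of_real r)}"

end

theory Submission imports Defs "HOL-Analysis.Function_Topology" "Jordan_Normal_Form.Char_Poly" begin

definition bf :: "'b set \<Rightarrow> ('b\<Rightarrow>'b\<Rightarrow>real) \<Rightarrow> ('b\<Rightarrow>real) \<Rightarrow> ('b\<Rightarrow>real) \<Rightarrow> real" where
  "bf X A u v = (\<Sum>x\<in>X. u x * (\<Sum>y\<in>X. A x y * v y))"

definition nrm :: "'b set \<Rightarrow> ('b\<Rightarrow>real) \<Rightarrow> real" where
  "nrm X u = (\<Sum>x\<in>X. (u x)^2)"

lemma bf_cong: "(\<And>x. x \<in> X \<Longrightarrow> u x = u' x) \<Longrightarrow> (\<And>x. x \<in> X \<Longrightarrow> v x = v' x) \<Longrightarrow> bf X A u v = bf X A u' v'"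
  unfolding bf_def by (intro sum.cong refl) (auto intro!: sum.cong)

lemma nrm_cong: "(\<And>x. x \<in> X \<Longrightarrow> u x = u' x) \<Longrightarrow> nrm X u = nrm X u'"
  unfolding nrm_def by (intro sum.cong refl) auto

lemma nrm_nonneg: "nrm X u \<ge> 0"
  unfolding nrm_def by (intro sum_nonneg) auto

lemma nrm_zero: assumes "finite X" "nrm X u = 0" "x \<in> X" shows "u x = 0"
  using assms unfolding nrm_def by (simp add: sum_nonneg_eq_0_iff)

lemma bf_sym: assumes "finite X" "\<forall>x\<in>X. \<forall>y\<in>X. A x y = A y x"
  shows "bf X A u v = bf X A v u"
proof -
  have "bf X A u v = (\<Sum>x\<in>X. \<Sum>y\<in>X. u x * A x y * v y)"
    unfolding bf_def by (simp add: sum_distrib_left mult.assoc)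
  also have "\<dots> = (\<Sum>y\<in>X. \<Sum>x\<in>X. u x * A x y * v y)" by (rule sum.swap)
  also have "\<dots> = (\<Sum>y\<in>X. \<Sum>x\<in>X. v y * A y x * u x)"
    using assms(2) by (intro sum.cong refl) (auto simp: mult.commute mult.left_commute)
  also have "\<dots> = bf X A v u"
    unfolding bf_def by (simp add: sum_distrib_left mult.assoc)
  finally show ?thesis .
qed

lemma bf_expand: "bf X A (\<lambda>x. u x + t * v x) (\<lambda>x. u x + t * v x) =
   bf X A u u + t * (bf X A u v + bf X A v u) + t^2 * bf X A v v"
  unfolding bf_def by (simp add: sum.distrib sum_distrib_left algebra_simps power2_eq_square)

lemma nrm_expand: "nrm X (\<lambda>x. u x + t * v x) = nrm X u + 2 * t * (\<Sum>x\<in>X. u x * v x) + t^2 * nrm X v"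
  unfolding nrm_def by (simp add: sum.distrib sum_distrib_left algebra_simps power2_eq_square)

lemma bf_scale: "bf X A (\<lambda>x. u x / s) (\<lambda>x. u x / s) = bf X A u u / s^2"
proof -
  have i: "(\<Sum>y\<in>X. A x y * (u y / s)) = (\<Sum>y\<in>X. A x y * u y) / s" for x
    by (simp add: sum_divide_distrib)
  have g: "(\<Sum>x\<in>X. u x / s * (S x / s)) = (\<Sum>x\<in>X. u x * S x) / s^2" for S :: "_ \<Rightarrow> real"
    by (simp add: sum_divide_distrib power2_eq_square)
  show ?thesis unfolding bf_def i by (rule g)
qed

lemma nrm_scale: "nrm X (\<lambda>x. u x / s) = nrm X u / s^2"
  unfolding nrm_def by (simp add: sum_divide_distrib power_divide)

lemma rayleigh:
  assumes fin: "finite X" and sym: "\<forall>x\<in>X. \<forall>y\<in>X. A x y = A y x"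
    and pos: "nrm X u > 0" and le: "lam0 * nrm X u \<le> bf X A u u"
  shows "\<exists>l. l \<ge> lam0 \<and> is_eigenvalue_on X A (complex_of_real l)"
proof -
  define T where "T = product_topology (\<lambda>_. euclideanreal) X"
  define K0 where "K0 = (PiE X (\<lambda>_. {-1..(1::real)}))"
  define K where "K = {f \<in> topspace T. nrm X f \<in> {1}} \<inter> K0"
  have cK0: "compactin T K0" unfolding T_def K0_def
    by (simp add: compactin_PiE compactin_euclidean_iff)
  have proj: "continuous_map T euclideanreal (\<lambda>f. f x)" if "x \<in> X" for x
    unfolding T_def using continuous_map_product_projection[OF that, of "\<lambda>_. euclideanreal"] by simp
  have cn: "continuous_map T euclideanreal (nrm X)"
    unfolding nrm_def power2_eq_square
    by (intro continuous_map_sum fin continuous_map_real_mult proj)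
  have cq: "continuous_map T euclideanreal (\<lambda>f. bf X A f f)"
    unfolding bf_def
    by (intro continuous_map_sum fin continuous_map_real_mult proj continuous_map_const[THEN iffD2]) auto
  have "closedin T {f \<in> topspace T. nrm X f \<in> {1}}"
    by (intro closedin_continuous_map_preimage[OF cn]) auto
  hence cK: "compactin T K" unfolding K_def using cK0 closed_Int_compactin by blast
  have comp: "compact ((\<lambda>f. bf X A f f) ` K)"
    using image_compactin[OF cK cq] compactin_euclidean_iff by blast
  from pos obtain x0 where x0: "x0 \<in> X" unfolding nrm_def by (metis less_irrefl sum.empty ex_in_conv)
  define e0 where "e0 = (\<lambda>x\<in>X. if x = x0 then 1 else (0::real))"
  have "nrm X e0 = (\<Sum>x\<in>X. if x = x0 then 1 else 0)" unfolding nrm_def e0_def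
    by (rule sum.cong[OF refl]) simp
  hence "nrm X e0 = 1" using fin x0 by simp
  hence "e0 \<in> K" unfolding K_def K0_def T_def topspace_product_topology e0_def by auto
  hence "(\<lambda>f. bf X A f f) ` K \<noteq> {}" by blast
  from compact_attains_sup[OF comp this] obtain f where fK: "f \<in> K"
    and fmax: "\<And>h. h \<in> K \<Longrightarrow> bf X A h h \<le> bf X A f f" by auto
  define l where "l = bf X A f f"
  have nf: "nrm X f = 1" using fK unfolding K_def by auto
  have claim1: "bf X A h h \<le> l * nrm X h" for h
  proof (cases "nrm X h = 0")
    case True
    have "\<forall>x\<in>X. h x = 0" using nrm_zero[OF fin True] by blast
    hence "bf X A h h = 0" unfolding bf_def by simp
    with True show ?thesis by simp
  next
    case False
    hence np: "nrm X h > 0" using nrm_nonneg[of X h] by linarith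
    define s where "s = sqrt (nrm X h)"
    have sp: "s > 0" and s2: "s^2 = nrm X h" unfolding s_def using np by auto
    define h' where "h' = (\<lambda>x\<in>X. h x / s)"
    have "nrm X h' = nrm X (\<lambda>x. h x / s)" unfolding h'_def by (rule nrm_cong) simp
    also have "\<dots> = nrm X h / s^2" by (rule nrm_scale)
    finally have nh': "nrm X h' = 1" using s2 np by simp
    have "h' \<in> K0" unfolding K0_def h'_def
    proof (rule PiE_I)
      fix x assume x: "x \<in> X"
      have "(h x)^2 \<le> nrm X h" unfolding nrm_def
        by (rule member_le_sum[OF x _ fin]) simp
      hence "\<bar>h x\<bar> \<le> s" unfolding s_def using real_le_rsqrt[of "\<bar>h x\<bar>" "nrm X h"] by simp
      hence "h x \<le> s" "- s \<le> h x" by linarith+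
      hence "h x / s \<le> 1" "-1 \<le> h x / s" using sp by (simp_all add: field_simps)
      hence "h x / s \<in> {-1..1}" by simp
      thus "(\<lambda>x\<in>X. h x / s) x \<in> {-1..1}" using x by simp
    qed (auto simp: h'_def)
    moreover have "K0 \<subseteq> topspace T" unfolding K0_def T_def topspace_product_topology
      by (rule PiE_mono) simp
    ultimately have "h' \<in> K" unfolding K_def using nh' by blast
    hence "bf X A h' h' \<le> l" using fmax l_def by auto
    moreover have "bf X A h' h' = bf X A (\<lambda>x. h x / s) (\<lambda>x. h x / s)" unfolding h'_def by (rule bf_cong) simp_all
    moreover have "bf X A (\<lambda>x. h x / s) (\<lambda>x. h x / s) = bf X A h h / s^2" by (rule bf_scale)
    ultimately have "bf X A h h / s^2 \<le> l" by simp
    thus ?thesis using s2 np by (simp add: divide_le_eq mult.commute)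
  qed
  define w where "w = (\<lambda>x. (\<Sum>y\<in>X. A x y * f y) - l * f x)"
  have key: "2 * nrm X w \<le> t * (l * nrm X w - bf X A w w)" if t: "t > 0" for t
  proof -
    have "bf X A (\<lambda>x. f x + t * w x) (\<lambda>x. f x + t * w x) \<le> l * nrm X (\<lambda>x. f x + t * w x)"
      by (rule claim1)
    hence "l + t * (2 * bf X A w f) + t^2 * bf X A w w \<le> l * (1 + 2 * t * (\<Sum>x\<in>X. f x * w x) + t^2 * nrm X w)"
      unfolding bf_expand nrm_expand nf l_def[symmetric] using bf_sym[OF fin sym, of f w] by simp
    moreover have "bf X A w f - l * (\<Sum>x\<in>X. f x * w x) = nrm X w"
      unfolding bf_def nrm_def w_def by (simp add: sum_distrib_left sum_subtractf[symmetric] algebra_simps power2_eq_square)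
    ultimately have "2 * t * nrm X w \<le> t^2 * (l * nrm X w - bf X A w w)"
      by (simp add: algebra_simps)
    thus ?thesis using t by (simp add: power2_eq_square mult.assoc)
  qed
  have w0: "nrm X w = 0"
  proof (rule ccontr)
    assume "nrm X w \<noteq> 0"
    hence wp: "nrm X w > 0" using nrm_nonneg[of X w] by linarith
    define c where "c = l * nrm X w - bf X A w w"
    define t where "t = nrm X w / (\<bar>c\<bar> + 1)"
    have tp: "t > 0" unfolding t_def using wp by simp
    have "2 * nrm X w \<le> t * c" using key[OF tp] c_def by simp
    also have "\<dots> \<le> t * \<bar>c\<bar>" using tp by (simp add: mult_left_mono)
    also have "\<dots> < nrm X w" unfolding t_def using wp
      by (simp add: divide_less_eq field_simps)
    finally show False using wp by simp
  qed
  have eig: "\<forall>x\<in>X. (\<Sum>y\<in>X. A x y * f y) = l * f x"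
    using nrm_zero[OF fin w0] unfolding w_def by simp
  have "is_eigenvalue_on X A (complex_of_real l)"
    unfolding is_eigenvalue_on_def
  proof (intro exI[of _ "\<lambda>x. complex_of_real (f x)"] conjI ballI)
    show "\<exists>x\<in>X. complex_of_real (f x) \<noteq> 0"
    proof (rule ccontr)
      assume "\<not> ?thesis"
      hence "\<forall>x\<in>X. f x = 0" by simp
      hence "nrm X f = 0" unfolding nrm_def by simp
      with nf show False by simp
    qed
  next
    fix x assume x: "x \<in> X"
    have "(\<Sum>y\<in>X. complex_of_real (A x y) * complex_of_real (f y)) = complex_of_real (\<Sum>y\<in>X. A x y * f y)"
      by simp
    also have "\<dots> = complex_of_real l * complex_of_real (f x)" using eig x by simp
    finally show "(\<Sum>y\<in>X. complex_of_real (A x y) * complex_of_real (f y)) = complex_of_real l * complex_of_real (f x)" .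
  qed
  moreover have "lam0 \<le> l"
  proof -
    have "lam0 * nrm X u \<le> l * nrm X u" using le claim1[of u] by linarith
    thus ?thesis using pos by simp
  qed
  ultimately show ?thesis by blast
qed

lemma eig_finite: assumes fin: "finite X" shows "finite {mu. is_eigenvalue_on X A mu}"
proof -
  obtain xs where xs: "distinct xs" "set xs = X" using finite_distinct_list[OF fin] by blast
  define n where "n = length xs"
  define M where "M = mat n n (\<lambda>(i,j). complex_of_real (A (xs!i) (xs!j)))"
  have M: "M \<in> carrier_mat n n" unfolding M_def by simp
  have bij: "bij_betw ((!) xs) {0..<n} X" using bij_betw_nth[OF xs(1) refl xs(2)[symmetric]] unfolding n_def
    by (simp add: atLeast0LessThan)
  have cp: "char_poly M \<noteq> 0" using degree_monic_char_poly[OF M] by auto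
  have "{mu. is_eigenvalue_on X A mu} \<subseteq> {mu. poly (char_poly M) mu = 0}"
  proof
    fix mu assume "mu \<in> {mu. is_eigenvalue_on X A mu}"
    then obtain v where v0: "\<exists>x\<in>X. v x \<noteq> 0"
      and ev: "\<forall>x\<in>X. (\<Sum>y\<in>X. complex_of_real (A x y) * v y) = mu * v x"
      unfolding is_eigenvalue_on_def by blast
    define w where "w = vec n (\<lambda>i. v (xs!i))"
    have wc: "w \<in> carrier_vec n" unfolding w_def by simp
    have wnz: "w \<noteq> 0\<^sub>v n"
    proof
      assume w0: "w = 0\<^sub>v n"
      from v0 obtain x where x: "x \<in> X" "v x \<noteq> 0" by blast
      then obtain i where i: "i < n" "xs ! i = x" using xs(2) unfolding n_def by (auto simp: in_set_conv_nth)
      have "w $ i = v x" unfolding w_def using i by simp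
      with w0 i x show False by simp
    qed
    have "M *\<^sub>v w = mu \<cdot>\<^sub>v w"
    proof (rule eq_vecI)
      fix i assume "i < dim_vec (mu \<cdot>\<^sub>v w)"
      hence i: "i < n" using wc by simp
      have "(M *\<^sub>v w) $ i = (\<Sum>j\<in>{0..<n}. complex_of_real (A (xs!i) (xs!j)) * v (xs!j))"
        using i M wc unfolding M_def w_def by (simp add: scalar_prod_def)
      also have "\<dots> = (\<Sum>y\<in>X. complex_of_real (A (xs!i) y) * v y)"
        by (rule sum.reindex_bij_betw[OF bij])
      also have "\<dots> = mu * v (xs!i)" using ev i xs(2) unfolding n_def by auto
      also have "\<dots> = (mu \<cdot>\<^sub>v w) $ i" unfolding w_def using i by simp
      finally show "(M *\<^sub>v w) $ i = (mu \<cdot>\<^sub>v w) $ i" .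
    next
      show "dim_vec (M *\<^sub>v w) = dim_vec (mu \<cdot>\<^sub>v w)" using M wc by simp
    qed
    hence "eigenvalue M mu" unfolding eigenvalue_def eigenvector_def using M wc wnz by auto
    thus "mu \<in> {mu. poly (char_poly M) mu = 0}" using eigenvalue_root_char_poly[OF M] by simp
  qed
  moreover have "finite {mu. poly (char_poly M) mu = 0}" by (rule poly_roots_finite[OF cp])
  ultimately show ?thesis by (rule finite_subset)
qed


lemma nrm_pos: assumes "finite X" "x \<in> X" "f x \<noteq> 0" shows "nrm X f > 0"
proof -
  have "(f x)^2 \<le> nrm X f" unfolding nrm_def by (rule member_le_sum[OF assms(2) _ assms(1)]) simp
  moreover have "(f x)^2 > 0" using assms(3) by simp
  ultimately show ?thesis by linarith
qed

lemma real_eig: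
  assumes fin: "finite X" and sym: "\<forall>x\<in>X. \<forall>y\<in>X. B x y = B y x" and ev: "is_eigenvalue_on X B mu"
  shows "mu = complex_of_real (Re mu) \<and> (\<exists>p. nrm X p > 0 \<and> (\<forall>x\<in>X. (\<Sum>y\<in>X. B x y * p y) = Re mu * p x))"
proof -
  obtain v where v0: "\<exists>x\<in>X. v x \<noteq> 0"
    and e: "\<forall>x\<in>X. (\<Sum>y\<in>X. complex_of_real (B x y) * v y) = mu * v x"
    using ev unfolding is_eigenvalue_on_def by blast
  define a where "a = (\<lambda>x. Re (v x))"
  define b where "b = (\<lambda>x. Im (v x))"
  have ea: "(\<Sum>y\<in>X. B x y * a y) = Re mu * a x - Im mu * b x" if x: "x \<in> X" for x
  proof -
    have "Re (\<Sum>y\<in>X. complex_of_real (B x y) * v y) = Re (mu * v x)" using e x by simp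
    thus ?thesis unfolding a_def b_def by (simp add: Re_sum)
  qed
  have eb: "(\<Sum>y\<in>X. B x y * b y) = Im mu * a x + Re mu * b x" if x: "x \<in> X" for x
  proof -
    have "Im (\<Sum>y\<in>X. complex_of_real (B x y) * v y) = Im (mu * v x)" using e x by simp
    thus ?thesis unfolding a_def b_def by (simp add: Im_sum)
  qed
  have "bf X B b a = (\<Sum>x\<in>X. b x * (Re mu * a x - Im mu * b x))"
    unfolding bf_def using ea by (intro sum.cong) auto
  also have "\<dots> = Re mu * (\<Sum>x\<in>X. a x * b x) - Im mu * nrm X b"
    unfolding nrm_def by (simp add: sum_subtractf sum_distrib_left algebra_simps power2_eq_square)
  finally have 1: "bf X B b a = Re mu * (\<Sum>x\<in>X. a x * b x) - Im mu * nrm X b" .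
  have "bf X B a b = (\<Sum>x\<in>X. a x * (Im mu * a x + Re mu * b x))"
    unfolding bf_def using eb by (intro sum.cong) auto
  also have "\<dots> = Im mu * nrm X a + Re mu * (\<Sum>x\<in>X. a x * b x)"
    unfolding nrm_def by (simp add: sum.distrib sum_distrib_left algebra_simps power2_eq_square)
  finally have 2: "bf X B a b = Im mu * nrm X a + Re mu * (\<Sum>x\<in>X. a x * b x)" .
  have "Im mu * (nrm X a + nrm X b) = 0"
    using 1 2 bf_sym[OF fin sym, of a b] by (simp add: algebra_simps)
  moreover have "nrm X a + nrm X b > 0"
  proof -
    from v0 obtain x where x: "x \<in> X" "v x \<noteq> 0" by blast
    hence "a x \<noteq> 0 \<or> b x \<noteq> 0" unfolding a_def b_def using complex_eqI by force
    thus ?thesis using nrm_pos[OF fin x(1)] nrm_nonneg[of X a] nrm_nonneg[of X b] by force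
  qed
  ultimately have im0: "Im mu = 0" by simp
  hence "mu = complex_of_real (Re mu)" by (simp add: complex_eqI)
  moreover have "\<exists>p. nrm X p > 0 \<and> (\<forall>x\<in>X. (\<Sum>y\<in>X. B x y * p y) = Re mu * p x)"
  proof -
    from v0 obtain x where x: "x \<in> X" "v x \<noteq> 0" by blast
    hence "a x \<noteq> 0 \<or> b x \<noteq> 0" unfolding a_def b_def using complex_eqI by force
    thus ?thesis
    proof
      assume "a x \<noteq> 0" thus ?thesis using nrm_pos[OF fin x(1)] ea im0 by (intro exI[of _ a]) auto
    next
      assume "b x \<noteq> 0" thus ?thesis using nrm_pos[OF fin x(1)] eb im0 by (intro exI[of _ b]) auto
    qed
  qed
  ultimately show ?thesis by blast
qed

definition Dm :: "'a set set \<Rightarrow> ('a set \<Rightarrow> 'a) \<Rightarrow> 'a set \<Rightarrow> 'a set \<Rightarrow> real" where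
  "Dm E head x y = ext_d E head x y + ext_d E head y x"

definition Dv :: "'b set \<Rightarrow> ('b \<Rightarrow> 'b \<Rightarrow> real) \<Rightarrow> ('b \<Rightarrow> real) \<Rightarrow> 'b \<Rightarrow> real" where
  "Dv X A f x = (\<Sum>y\<in>X. A x y * f y)"

context
  fixes V :: "'a set" and E :: "'a set set" and head :: "'a set \<Rightarrow> 'a"
  assumes sg: "simple_graph V E" and ori: "orientation E head"
begin

lemma edge: "e \<in> E \<Longrightarrow> \<exists>a b. a \<in> V \<and> b \<in> V \<and> a \<noteq> b \<and> e = {a, b}"
  using sg unfolding simple_graph_def by blast

lemma nsing: "e \<in> E \<Longrightarrow> e \<noteq> {c}"
  using edge by (metis doubleton_eq_iff insert_absorb2)

lemma headin: "e \<in> E \<Longrightarrow> head e \<in> e"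
  using ori unfolding orientation_def by blast

lemma finX: "finite (simplices V E)"
proof -
  have fV: "finite V" using sg unfolding simple_graph_def by blast
  have "E \<subseteq> Pow V" using edge by blast
  hence "finite E" using fV finite_subset by blast
  thus ?thesis unfolding simplices_def using fV by simp
qed

lemma absD_E: "e \<in> E \<Longrightarrow> \<bar>Dm E head e t\<bar> = (if \<exists>a\<in>e. t = {a} then 1 else 0)"
  using nsing headin[of e] unfolding Dm_def ext_d_def by auto

lemma D_nz: "Dm E head x y \<noteq> 0 \<Longrightarrow> (x \<in> E \<and> (\<exists>a\<in>x. y = {a})) \<or> (y \<in> E \<and> (\<exists>a\<in>y. x = {a}))"
  using headin unfolding Dm_def ext_d_def by (auto split: if_splits)

lemma D_sep: "Dm E head x y \<noteq> 0 \<Longrightarrow> (x \<in> E \<longleftrightarrow> y \<notin> E)"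
  using D_nz nsing by blast

lemma D_sym: "Dm E head x y = Dm E head y x"
  unfolding Dm_def by simp

lemma notE_sing: "x \<in> simplices V E \<Longrightarrow> x \<notin> E \<Longrightarrow> \<exists>a\<in>V. x = {a}"
  unfolding simplices_def by auto

lemma A_VE: "x \<in> simplices V E \<Longrightarrow> x \<notin> E \<Longrightarrow> y \<in> E \<Longrightarrow> conn_adj x y = \<bar>Dm E head x y\<bar>"
proof -
  assume x: "x \<in> simplices V E" "x \<notin> E" and y: "y \<in> E"
  then obtain a where a: "x = {a}" using notE_sing by blast
  have "\<bar>Dm E head x y\<bar> = (if a \<in> y then 1 else 0)" using absD_E[OF y, of x] D_sym[of x y] a by auto
  moreover have "conn_adj x y = (if a \<in> y then 1 else 0)" unfolding conn_adj_def a using nsing[OF y, of a] by auto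
  ultimately show ?thesis by simp
qed

lemma A_VV: "x \<in> simplices V E \<Longrightarrow> x \<notin> E \<Longrightarrow> y \<in> simplices V E \<Longrightarrow> y \<notin> E \<Longrightarrow> conn_adj x y = 0"
  using notE_sing[of x] notE_sing[of y] unfolding conn_adj_def by auto

lemma A_EE: assumes e: "e \<in> E" and f: "f \<in> E"
  shows "conn_adj e f = (\<Sum>t\<in>simplices V E. \<bar>Dm E head e t\<bar> * \<bar>Dm E head t f\<bar>) - (if e = f then 2 else 0)"
proof -
  let ?X = "simplices V E"
  let ?S = "(\<lambda>a. {a}) ` (e \<inter> f)"
  have "(\<Sum>t\<in>?X. \<bar>Dm E head e t\<bar> * \<bar>Dm E head t f\<bar>) = (\<Sum>t\<in>?X. if t \<in> ?S then 1 else 0)"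
    using absD_E[OF e] absD_E[OF f] D_sym by (intro sum.cong refl) auto
  also have "\<dots> = real (card (?X \<inter> ?S))" using finX by (simp add: sum.If_cases)
  also have "?X \<inter> ?S = ?S" using edge[OF e] unfolding simplices_def by auto
  also have "card ?S = card (e \<inter> f)" by (rule card_image) (auto simp: inj_on_def)
  finally have s: "(\<Sum>t\<in>?X. \<bar>Dm E head e t\<bar> * \<bar>Dm E head t f\<bar>) = real (card (e \<inter> f))" .
  obtain a b where ab: "a \<noteq> b" "e = {a, b}" using edge[OF e] by blast
  obtain c d where cd: "c \<noteq> d" "f = {c, d}" using edge[OF f] by blast
  have "conn_adj e f = real (card (e \<inter> f)) - (if e = f then 2 else 0)"
    unfolding conn_adj_def ab cd using ab(1) cd(1)
    by (cases "a = c"; cases "a = d"; cases "b = c"; cases "b = d") (auto simp: insert_commute)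
  with s show ?thesis by simp
qed

lemma hodge_eq: "hodge V E head x y = (\<Sum>z\<in>simplices V E. Dm E head x z * Dm E head z y)"
  unfolding hodge_def Let_def mat_mult_on_def Dm_def by simp

end


lemma swap_lemma: fixes a :: "'b \<Rightarrow> real" shows "(\<Sum>y\<in>X. (\<Sum>t\<in>X. a t * b t y) * w y) = (\<Sum>t\<in>X. a t * (\<Sum>y\<in>X. b t y * w y))"
proof -
  have "(\<Sum>y\<in>X. (\<Sum>t\<in>X. a t * b t y) * w y) = (\<Sum>y\<in>X. \<Sum>t\<in>X. a t * b t y * w y)"
    by (simp add: sum_distrib_right)
  also have "\<dots> = (\<Sum>t\<in>X. \<Sum>y\<in>X. a t * b t y * w y)" by (rule sum.swap)
  also have "\<dots> = (\<Sum>t\<in>X. a t * (\<Sum>y\<in>X. b t y * w y))" by (simp add: sum_distrib_left mult.assoc)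
  finally show ?thesis .
qed

lemma Dv_add: "Dv X A (\<lambda>x. f x + g x) x = Dv X A f x + Dv X A g x"
  unfolding Dv_def by (simp add: sum.distrib algebra_simps)

lemma Dv_cong: "(\<And>y. y \<in> X \<Longrightarrow> f y = g y) \<Longrightarrow> Dv X A f x = Dv X A g x"
  unfolding Dv_def by (intro sum.cong) auto

lemma nrm_Dv: assumes fin: "finite X" and sym: "\<forall>x\<in>X. \<forall>y\<in>X. A x y = A y x"
  shows "nrm X (Dv X A u) = (\<Sum>x\<in>X. u x * Dv X A (Dv X A u) x)"
proof -
  have "nrm X (Dv X A u) = bf X A (Dv X A u) u"
    unfolding nrm_def bf_def Dv_def by (simp add: power2_eq_square)
  also have "\<dots> = bf X A u (Dv X A u)" by (rule bf_sym[OF fin sym])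
  also have "\<dots> = (\<Sum>x\<in>X. u x * Dv X A (Dv X A u) x)" unfolding bf_def Dv_def by simp
  finally show ?thesis .
qed

context
  fixes V :: "'a set" and E :: "'a set set" and head :: "'a set \<Rightarrow> 'a"
  assumes sg: "simple_graph V E" and ori: "orientation E head"
begin

lemma Dv_VtoE: assumes "\<forall>y\<in>simplices V E. y \<in> E \<longrightarrow> f y = 0" "x \<in> simplices V E" "x \<notin> E"
  shows "Dv (simplices V E) (Dm E head) f x = 0"
  unfolding Dv_def
proof (rule sum.neutral, rule ballI)
  fix y assume y: "y \<in> simplices V E"
  show "Dm E head x y * f y = 0"
  proof (cases "Dm E head x y = 0")
    case False
    hence "y \<in> E" using D_sep[OF sg ori False] assms(3) by blast
    thus ?thesis using assms(1) y by simp
  qed simp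
qed

lemma Dv_EtoV: assumes "\<forall>y\<in>simplices V E. y \<notin> E \<longrightarrow> f y = 0" "x \<in> simplices V E" "x \<in> E"
  shows "Dv (simplices V E) (Dm E head) f x = 0"
  unfolding Dv_def
proof (rule sum.neutral, rule ballI)
  fix y assume y: "y \<in> simplices V E"
  show "Dm E head x y * f y = 0"
  proof (cases "Dm E head x y = 0")
    case False
    hence "y \<notin> E" using D_sep[OF sg ori False] assms(3) by blast
    thus ?thesis using assms(1) y by simp
  qed simp
qed

lemma symD: "\<forall>x\<in>simplices V E. \<forall>y\<in>simplices V E. Dm E head x y = Dm E head y x"
  using D_sym[OF sg ori] by blast

lemma step2:
  assumes m: "m > 0" and pn: "nrm (simplices V E) p > 0"
    and pe: "\<forall>x\<in>simplices V E. Dv (simplices V E) (Dm E head) (Dv (simplices V E) (Dm E head) p) x = m * p x"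
  shows "\<exists>u. (\<forall>x\<in>simplices V E. x \<notin> E \<longrightarrow> u x = 0) \<and> nrm (simplices V E) u > 0 \<and>
     (\<forall>x\<in>simplices V E. Dv (simplices V E) (Dm E head) (Dv (simplices V E) (Dm E head) u) x = m * u x)"
proof -
  let ?X = "simplices V E"
  let ?D = "Dv ?X (Dm E head)"
  define pE where "pE = (\<lambda>x. if x \<in> E then p x else 0)"
  define pV where "pV = (\<lambda>x. if x \<in> E then 0 else p x)"
  have psplit: "p = (\<lambda>x. pE x + pV x)" unfolding pE_def pV_def by auto
  have hE: "?D (?D pE) x = m * pE x" if x: "x \<in> ?X" for x
  proof -
    have d1: "?D p y = ?D pE y + ?D pV y" for y
      by (subst psplit) (rule Dv_add)
    have "?D (?D p) x = ?D (\<lambda>y. ?D pE y + ?D pV y) x" using d1 by (intro Dv_cong) auto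
    also have "\<dots> = ?D (?D pE) x + ?D (?D pV) x" by (rule Dv_add)
    finally have lin: "?D (?D p) x = ?D (?D pE) x + ?D (?D pV) x" .
    show ?thesis
    proof (cases "x \<in> E")
      case True
      have "\<forall>y\<in>?X. y \<notin> E \<longrightarrow> ?D pV y = 0"
        using Dv_VtoE[of pV] unfolding pV_def by auto
      hence "?D (?D pV) x = 0" using Dv_EtoV[OF _ x True] by blast
      thus ?thesis using lin pe x True unfolding pE_def by simp
    next
      case False
      have "\<forall>y\<in>?X. y \<in> E \<longrightarrow> ?D pE y = 0"
        using Dv_EtoV[of pE] unfolding pE_def by auto
      hence "?D (?D pE) x = 0" using Dv_VtoE[OF _ x False] by blast
      thus ?thesis using False unfolding pE_def by simp
    qed
  qed
  show ?thesis
  proof (cases "\<exists>x\<in>?X. pE x \<noteq> 0")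
    case True
    then obtain x where x: "x \<in> ?X" "pE x \<noteq> 0" by blast
    have "nrm ?X pE > 0" using nrm_pos[of ?X x pE] finX[OF sg ori] x by blast
    thus ?thesis using hE by (intro exI[of _ pE]) (auto simp: pE_def)
  next
    case False
    hence p0: "\<forall>y\<in>?X. y \<in> E \<longrightarrow> p y = 0" unfolding pE_def by auto
    define u where "u = ?D p"
    have uE: "\<forall>x\<in>?X. x \<notin> E \<longrightarrow> u x = 0" unfolding u_def using Dv_VtoE[OF p0] by blast
    have ue: "?D (?D u) x = m * u x" if x: "x \<in> ?X" for x
    proof -
      have "?D (?D u) x = ?D (\<lambda>y. m * p y) x" unfolding u_def using pe by (intro Dv_cong) auto
      also have "\<dots> = m * u x" unfolding u_def Dv_def by (simp add: sum_distrib_left algebra_simps)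
      finally show ?thesis .
    qed
    have "nrm ?X u > 0"
    proof (rule ccontr)
      assume "\<not> ?thesis"
      hence "nrm ?X u = 0" using nrm_nonneg[of ?X u] by linarith
      hence u0: "\<forall>y\<in>?X. u y = 0" using nrm_zero[OF finX[OF sg ori]] by blast
      have "\<forall>x\<in>?X. p x = 0"
      proof
        fix x assume x: "x \<in> ?X"
        have "?D u x = 0" unfolding Dv_def using u0 by simp
        moreover have "?D u x = m * p x" using pe x unfolding u_def by simp
        ultimately show "p x = 0" using m by simp
      qed
      hence "nrm ?X p = 0" unfolding nrm_def by simp
      with pn show False by simp
    qed
    thus ?thesis using uE ue by blast
  qed
qed

lemma step3:
  assumes uE: "\<forall>x\<in>simplices V E. x \<notin> E \<longrightarrow> u x = 0" and un: "nrm (simplices V E) u > 0"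
    and ue: "\<forall>x\<in>simplices V E. Dv (simplices V E) (Dm E head) (Dv (simplices V E) (Dm E head) u) x = m * u x"
  shows "nrm (simplices V E) (Dv (simplices V E) (\<lambda>x y. \<bar>Dm E head x y\<bar>) (\<lambda>x. \<bar>u x\<bar>))
          \<ge> m * nrm (simplices V E) (\<lambda>x. \<bar>u x\<bar>)"
proof -
  let ?X = "simplices V E"
  let ?D = "Dv ?X (Dm E head)"
  have fin: "finite ?X" by (rule finX[OF sg ori])
  have "nrm ?X (?D u) = (\<Sum>x\<in>?X. u x * ?D (?D u) x)" by (rule nrm_Dv[OF fin symD])
  also have "\<dots> = (\<Sum>x\<in>?X. m * (u x)^2)" using ue by (intro sum.cong) (auto simp: power2_eq_square)
  also have "\<dots> = m * nrm ?X (\<lambda>x. \<bar>u x\<bar>)" unfolding nrm_def by (simp add: sum_distrib_left)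
  finally have 1: "nrm ?X (?D u) = m * nrm ?X (\<lambda>x. \<bar>u x\<bar>)" .
  have "nrm ?X (?D u) \<le> nrm ?X (Dv ?X (\<lambda>x y. \<bar>Dm E head x y\<bar>) (\<lambda>x. \<bar>u x\<bar>))"
    unfolding nrm_def
  proof (rule sum_mono)
    fix x assume x: "x \<in> ?X"
    have "\<bar>?D u x\<bar> \<le> (\<Sum>y\<in>?X. \<bar>Dm E head x y * u y\<bar>)" unfolding Dv_def by (rule sum_abs)
    also have "\<dots> = Dv ?X (\<lambda>x y. \<bar>Dm E head x y\<bar>) (\<lambda>x. \<bar>u x\<bar>) x" unfolding Dv_def by (simp add: abs_mult)
    finally have "\<bar>?D u x\<bar> \<le> Dv ?X (\<lambda>x y. \<bar>Dm E head x y\<bar>) (\<lambda>x. \<bar>u x\<bar>) x" .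
    thus "(?D u x)^2 \<le> (Dv ?X (\<lambda>x y. \<bar>Dm E head x y\<bar>) (\<lambda>x. \<bar>u x\<bar>) x)^2"
      by (metis abs_ge_zero power2_abs power_mono)
  qed
  with 1 show ?thesis by simp
qed

lemma symA: "\<forall>x\<in>simplices V E. \<forall>y\<in>simplices V E. conn_adj x y = conn_adj y x"
  unfolding conn_adj_def by (auto simp: Int_commute)

lemma stepK:
  assumes wE: "\<forall>x\<in>simplices V E. x \<notin> E \<longrightarrow> w x = 0" and wn: "nrm (simplices V E) w > 0"
    and zdef: "z = Dv (simplices V E) (\<lambda>x y. \<bar>Dm E head x y\<bar>) w"
    and zn: "nrm (simplices V E) z \<ge> m * nrm (simplices V E) w"
    and l0: "l0 > 0" and leq: "l0 * (l0 + 2) = m * (l0 + 1)"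
  shows "\<exists>y. nrm (simplices V E) y > 0 \<and> l0 * nrm (simplices V E) y \<le> bf (simplices V E) conn_adj y y"
proof -
  let ?X = "simplices V E"
  let ?Ma = "\<lambda>x y. \<bar>Dm E head x y\<bar>"
  have fin: "finite ?X" by (rule finX[OF sg ori])
  have zV: "z x = 0" if x: "x \<in> ?X" "x \<in> E" for x
    unfolding zdef Dv_def
  proof (rule sum.neutral, rule ballI)
    fix y assume y: "y \<in> ?X"
    show "\<bar>Dm E head x y\<bar> * w y = 0"
    proof (cases "Dm E head x y = 0")
      case False
      hence "y \<notin> E" using D_sep[OF sg ori False] x by blast
      thus ?thesis using wE y by simp
    qed simp
  qed
  have a: "bf ?X conn_adj z z = 0"
    unfolding bf_def
  proof (rule sum.neutral, rule ballI)
    fix x assume x: "x \<in> ?X"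
    show "z x * (\<Sum>y\<in>?X. conn_adj x y * z y) = 0"
    proof (cases "x \<in> E")
      case True thus ?thesis using zV x by simp
    next
      case False
      have "(\<Sum>y\<in>?X. conn_adj x y * z y) = 0"
        by (rule sum.neutral) (use zV A_VV[OF sg ori x False] in auto)
      thus ?thesis by simp
    qed
  qed
  have inner: "(\<Sum>y\<in>?X. conn_adj x y * w y) = z x" if x: "x \<in> ?X" "x \<notin> E" for x
    unfolding zdef Dv_def
  proof (rule sum.cong[OF refl])
    fix y assume y: "y \<in> ?X"
    show "conn_adj x y * w y = \<bar>Dm E head x y\<bar> * w y"
      using A_VE[OF sg ori x, of y] wE y by (cases "y \<in> E") auto
  qed
  have b: "bf ?X conn_adj z w = nrm ?X z"
    unfolding bf_def nrm_def
  proof (rule sum.cong[OF refl])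
    fix x assume x: "x \<in> ?X"
    show "z x * (\<Sum>y\<in>?X. conn_adj x y * w y) = (z x)^2"
      using inner[OF x] zV[OF x] by (cases "x \<in> E") (auto simp: power2_eq_square)
  qed
  have c: "bf ?X conn_adj w z = nrm ?X z" using b bf_sym[OF fin symA] by simp
  have innerE: "(\<Sum>y\<in>?X. conn_adj x y * w y) = Dv ?X ?Ma z x - 2 * w x" if x: "x \<in> ?X" "x \<in> E" for x
  proof -
    have "(\<Sum>y\<in>?X. conn_adj x y * w y) =
          (\<Sum>y\<in>?X. (\<Sum>t\<in>?X. ?Ma x t * ?Ma t y) * w y - (if x = y then 2 * w y else 0))"
    proof (rule sum.cong[OF refl])
      fix y assume y: "y \<in> ?X"
      show "conn_adj x y * w y = (\<Sum>t\<in>?X. ?Ma x t * ?Ma t y) * w y - (if x = y then 2 * w y else 0)"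
      proof (cases "y \<in> E")
        case True
        have "conn_adj x y = (\<Sum>t\<in>?X. ?Ma x t * ?Ma t y) - (if x = y then 2 else 0)"
          by (rule A_EE[OF sg ori x(2) True])
        hence "conn_adj x y * w y = ((\<Sum>t\<in>?X. ?Ma x t * ?Ma t y) - (if x = y then 2 else 0)) * w y"
          by (rule arg_cong[where f="\<lambda>t. t * w y"])
        also have "\<dots> = (\<Sum>t\<in>?X. ?Ma x t * ?Ma t y) * w y - (if x = y then 2 * w y else 0)"
          by (simp add: left_diff_distrib)
        finally show ?thesis .
      next
        case False thus ?thesis using wE y by auto
      qed
    qed
    also have "\<dots> = (\<Sum>y\<in>?X. (\<Sum>t\<in>?X. ?Ma x t * ?Ma t y) * w y) - 2 * w x"
      using x fin by (simp add: sum_subtractf)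
    also have "(\<Sum>y\<in>?X. (\<Sum>t\<in>?X. ?Ma x t * ?Ma t y) * w y) = Dv ?X ?Ma z x"
      unfolding zdef Dv_def by (rule swap_lemma)
    finally show ?thesis .
  qed
  have d: "bf ?X conn_adj w w = nrm ?X z - 2 * nrm ?X w"
  proof -
    have "bf ?X conn_adj w w = (\<Sum>x\<in>?X. w x * Dv ?X ?Ma z x - 2 * (w x)^2)"
      unfolding bf_def
    proof (rule sum.cong[OF refl])
      fix x assume x: "x \<in> ?X"
      show "w x * (\<Sum>y\<in>?X. conn_adj x y * w y) = w x * Dv ?X ?Ma z x - 2 * (w x)^2"
      proof (cases "x \<in> E")
        case True
        show ?thesis unfolding innerE[OF x True] by (simp add: algebra_simps power2_eq_square)
      next
        case False
        thus ?thesis using wE x by simp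
      qed
    qed
    also have "\<dots> = bf ?X ?Ma w z - 2 * nrm ?X w"
      unfolding bf_def Dv_def nrm_def by (simp add: sum_subtractf sum_distrib_left)
    also have "bf ?X ?Ma w z = bf ?X ?Ma z w" by (rule bf_sym[OF fin]) (use symD in auto)
    also have "bf ?X ?Ma z w = nrm ?X z" unfolding bf_def nrm_def zdef Dv_def by (simp add: power2_eq_square)
    finally show ?thesis .
  qed
  have e: "(\<Sum>x\<in>?X. w x * z x) = 0"
    by (rule sum.neutral) (use wE zV in auto)
  define c where "c = 1 / l0"
  define y where "y = (\<lambda>x. w x + c * z x)"
  let ?S = "nrm ?X z" and ?W = "nrm ?X w"
  have byy: "bf ?X conn_adj y y = ?S - 2 * ?W + 2 * c * ?S"
    unfolding y_def bf_expand a b c d by simp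
  have ny: "nrm ?X y = ?W + c^2 * ?S"
    unfolding y_def nrm_expand e by simp
  have Sn: "?S \<ge> 0" by (rule nrm_nonneg)
  have "nrm ?X y > 0" using ny wn Sn by (simp add: add_pos_nonneg)
  moreover have "l0 * nrm ?X y \<le> bf ?X conn_adj y y"
  proof -
    have e2: "l0 + 2 = m * (l0 + 1) / l0" using leq l0 by (simp add: field_simps)
    have "bf ?X conn_adj y y - l0 * nrm ?X y = ?S + ?S / l0 - (l0 + 2) * ?W"
      unfolding byy ny c_def using l0 by (simp add: field_simps power2_eq_square)
    also have "(l0 + 2) * ?W = m * (l0 + 1) / l0 * ?W" by (subst e2) (rule refl)
    also have "?S + ?S / l0 - m * (l0 + 1) / l0 * ?W = (l0 + 1) / l0 * (?S - m * ?W)"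
      using l0 by (simp add: field_simps)
    also have "\<dots> \<ge> 0" using l0 zn by simp
    finally show ?thesis by simp
  qed
  ultimately show ?thesis by blast
qed

lemma H_Dv: "x \<in> simplices V E \<Longrightarrow> (\<Sum>y\<in>simplices V E. hodge V E head x y * p y) =
   Dv (simplices V E) (Dm E head) (Dv (simplices V E) (Dm E head) p) x"
  unfolding hodge_eq[OF sg ori] Dv_def by (rule swap_lemma)

lemma symH: "\<forall>x\<in>simplices V E. \<forall>y\<in>simplices V E. hodge V E head x y = hodge V E head y x"
  unfolding hodge_eq[OF sg ori] using D_sym[OF sg ori] by (auto simp: mult.commute intro!: sum.cong)

end


theorem mainTheorem3:
  fixes V :: "'a set" and E :: "'a set set" and head :: "'a set \<Rightarrow> 'a"
  assumes "simple_graph V E" and "V \<noteq> {}" and "orientation E head"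
  defines "r \<equiv> largest_eigenvalue_on (simplices V E) conn_adj"
  shows "spectral_radius_on (simplices V E) (hodge V E head) \<le> (1 + r) - 1 / (1 + r)"
proof -
  note sg = assms(1) and ori = assms(3)
  let ?X = "simplices V E"
  let ?H = "hodge V E head"
  have fin: "finite ?X" by (rule finX[OF sg ori])
  define R where "R = {r. is_eigenvalue_on ?X conn_adj (complex_of_real r)}"
  have "R = complex_of_real -` {mu. is_eigenvalue_on ?X conn_adj mu}" unfolding R_def by auto
  hence finR: "finite R" using finite_vimageI[OF eig_finite[OF fin] inj_of_real] by simp
  have rdef: "r = Max R" unfolding r_def largest_eigenvalue_on_def R_def ..
  have rge: "l \<le> r" if "is_eigenvalue_on ?X conn_adj (complex_of_real l)" for l
    unfolding rdef using finR that by (intro Max_ge) (auto simp: R_def)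
  obtain v0 where v0: "v0 \<in> V" using assms(2) by blast
  define x0 where "x0 = {v0}"
  have x0X: "x0 \<in> ?X" unfolding x0_def simplices_def using v0 by simp
  define dl where "dl = (\<lambda>x. if x = x0 then 1 else (0::real))"
  have "nrm ?X dl = (\<Sum>x\<in>?X. if x = x0 then 1 else 0)" unfolding nrm_def dl_def
    by (rule sum.cong[OF refl]) simp
  hence ndl: "nrm ?X dl = 1" using fin x0X by simp
  have bfdl: "bf ?X B dl dl = B x0 x0" for B
  proof -
    have i: "(\<Sum>y\<in>?X. B x y * dl y) = B x x0" if "x \<in> ?X" for x
    proof -
      have "(\<Sum>y\<in>?X. B x y * dl y) = (\<Sum>y\<in>?X. if y = x0 then B x x0 else 0)"
        unfolding dl_def by (intro sum.cong) auto
      thus ?thesis using fin x0X by simp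
    qed
    have "bf ?X B dl dl = (\<Sum>x\<in>?X. if x = x0 then B x0 x0 else 0)"
      unfolding bf_def using i by (intro sum.cong) (auto simp: dl_def)
    thus ?thesis using fin x0X by simp
  qed
  have r0: "r \<ge> 0"
  proof -
    have "0 * nrm ?X dl \<le> bf ?X conn_adj dl dl" unfolding bfdl by (simp add: conn_adj_def)
    from rayleigh[OF fin symA[OF sg ori] _ this] ndl obtain l where "l \<ge> 0"
      "is_eigenvalue_on ?X conn_adj (complex_of_real l)" by auto
    thus ?thesis using rge by force
  qed
  define SH where "SH = {cmod mu |mu. is_eigenvalue_on ?X ?H mu}"
  have "SH = cmod ` {mu. is_eigenvalue_on ?X ?H mu}" unfolding SH_def by auto
  hence finSH: "finite SH" using eig_finite[OF fin] by simp
  have "SH \<noteq> {}"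
  proof -
    have "bf ?X ?H dl dl * nrm ?X dl \<le> bf ?X ?H dl dl" using ndl by simp
    from rayleigh[OF fin symH[OF sg ori] _ this] ndl obtain l where
      "is_eigenvalue_on ?X ?H (complex_of_real l)" by auto
    thus ?thesis unfolding SH_def by blast
  qed
  hence "Max SH \<in> SH" using finSH by (rule Max_in[rotated])
  then obtain mu where mu: "is_eigenvalue_on ?X ?H mu" and sr: "spectral_radius_on ?X ?H = cmod mu"
    unfolding spectral_radius_on_def SH_def by auto
  define m where "m = Re mu"
  obtain p where mueq: "mu = complex_of_real m" and pn: "nrm ?X p > 0"
    and pe: "\<forall>x\<in>?X. (\<Sum>y\<in>?X. ?H x y * p y) = m * p x"
    using real_eig[OF fin symH[OF sg ori] mu] unfolding m_def by blast
  let ?D = "Dv ?X (Dm E head)"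
  have pe2: "\<forall>x\<in>?X. ?D (?D p) x = m * p x" using pe H_Dv[OF sg ori] by simp
  have "nrm ?X (?D p) = (\<Sum>x\<in>?X. p x * ?D (?D p) x)" by (rule nrm_Dv[OF fin symD[OF sg ori]])
  also have "\<dots> = m * nrm ?X p" unfolding nrm_def using pe2
    by (simp add: sum_distrib_left power2_eq_square algebra_simps)
  finally have "m * nrm ?X p \<ge> 0" using nrm_nonneg[of ?X "?D p"] by simp
  hence m0: "m \<ge> 0" using pn by (simp add: zero_le_mult_iff)
  have cm: "cmod mu = m" using mueq m0 by simp
  have "1 / (1 + r) \<le> 1" using r0 by simp
  hence r1: "1 / (1 + r) \<le> 1 + r" using r0 by linarith
  show ?thesis
  proof (cases "m = 0")
    case True thus ?thesis using sr cm r1 by simp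
  next
    case False
    hence mp: "m > 0" using m0 by simp
    obtain u where uE: "\<forall>x\<in>?X. x \<notin> E \<longrightarrow> u x = 0" and un: "nrm ?X u > 0"
      and ue: "\<forall>x\<in>?X. ?D (?D u) x = m * u x"
      using step2[OF sg ori mp pn pe2] by blast
    define w where "w = (\<lambda>x. \<bar>u x\<bar>)"
    define z where "z = Dv ?X (\<lambda>x y. \<bar>Dm E head x y\<bar>) w"
    have zn: "nrm ?X z \<ge> m * nrm ?X w" unfolding z_def w_def by (rule step3[OF sg ori uE un ue])
    have wE: "\<forall>x\<in>?X. x \<notin> E \<longrightarrow> w x = 0" using uE unfolding w_def by simp
    have wn: "nrm ?X w > 0" using un unfolding w_def nrm_def by simp
    define s where "s = sqrt (m^2 + 4)"
    have ss: "s * s = m * m + 4" unfolding s_def by (simp add: power2_eq_square)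
    have "(2 - m)^2 < m^2 + 4" using mp by (simp add: power2_eq_square algebra_simps)
    hence s2: "2 - m < s" unfolding s_def by (rule real_less_rsqrt)
    define l0 where "l0 = ((m - 2) + s) / 2"
    have l0p: "l0 > 0" unfolding l0_def using s2 by simp
    have "(m - 2 + s) * (m + 2 + s) = m * m + 2 * m * s + s * s - 4" by (simp add: algebra_simps)
    hence "(m - 2 + s) * (m + 2 + s) = 2 * m * m + 2 * m * s" using ss by simp
    hence leq: "l0 * (l0 + 2) = m * (l0 + 1)" unfolding l0_def by (simp add: field_simps)
    obtain y where yn: "nrm ?X y > 0" and yb: "l0 * nrm ?X y \<le> bf ?X conn_adj y y"
      using stepK[OF sg ori wE wn z_def zn l0p leq] by blast
    obtain l where "l \<ge> l0" "is_eigenvalue_on ?X conn_adj (complex_of_real l)"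
      using rayleigh[OF fin symA[OF sg ori] yn yb] by blast
    hence rl0: "r \<ge> l0" using rge by force
    have "m = (1 + l0) - 1 / (1 + l0)"
      using leq l0p by (simp add: field_simps)
    also have "\<dots> \<le> (1 + r) - 1 / (1 + r)"
    proof -
      have "1 / (1 + r) \<le> 1 / (1 + l0)" using rl0 l0p by (simp add: frac_le)
      thus ?thesis using rl0 by simp
    qed
    finally show ?thesis using sr cm by simp
  qed
qed

end
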